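(* Let $\varepsilon>0$, $\Omega\subset\mathbb{R}^2$ bounded open, $u\in\mathcal{SF}_\varepsilon(\Omega)$ and $R\in\mathcal{R}_\varepsilon(u)$. Then $u(\mathcal{L}_\varepsilon(R))$ contains at most four points.
   Context: $\mathcal{L}=\{ae_1+b\hat e_2:a,b\in\mathbb{Z}\}$ with $e_1=(1,0)$, $\hat e_2=\frac12(1,\sqrt3)$, $\mathcal{L}_\varepsilon=\varepsilon\mathcal{L}$, $\mathcal{L}_\varepsilon(R)=\mathcal{L}_\varepsilon\cap R$; $\mathcal{T}_\varepsilon$ is the set of closed triangles with vertices in $\mathcal{L}_\varepsilon$ pairwise at distance $\varepsilon$; $\mathcal{E}_\varepsilon$ the set of segments $[i,j]$, $i,j\in\mathcal{L}_\varepsilon$, $|i-j|=\varepsilon$. $n=(0,0,1)$; $\mathcal{SF}_\varepsilon(\Omega)$ is the set of $u:\mathcal{L}_\varepsilon\to\mathbb{S}^2$ with $u=n$ on $\mathcal{L}_\varepsilon\setminus\Omega$. $\mathcal{N}_\varepsilon(u)=\{[i,j]\in\mathcal{E}_\varepsilon:u(i)=-u(j)\}$. Two triangles of $\mathcal{T}_\varepsilon$ are neighbours if their intersection is an edge in $\mathcal{N}_\varepsilon(u)$, and connected if joined by a finite chain of consecutive neighbours. $\mathcal{R}_\varepsilon(u)$ is the set of admissible interpolation regions: unions of pairwise connected triangles of $\mathcal{T}_\varepsilon$ that are maximal with respect to inclusion. *)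

theory Defs
  imports "HOL-Analysis.Analysis"
begin

type_synonym pt = "real \<times> real"
type_synonym spin = "real \<times> real \<times> real"

definition lattice :: "real \<Rightarrow> pt set" where
  "lattice eps = {(eps * (of_int a + of_int b / 2), eps * (of_int b * sqrt 3 / 2)) | a b. True}"

definition north :: spin where "north = (0, 0, 1)"

definition SF :: "real \<Rightarrow> pt set \<Rightarrow> (pt \<Rightarrow> spin) set" where
  "SF eps \<Omega> = {u. (\<forall>i\<in>lattice eps. u i \<in> sphere 0 1) \<and>
                   (\<forall>i\<in>lattice eps - \<Omega>. u i = north)}"

definition triangles :: "real \<Rightarrow> pt set set" where
  "triangles eps = {convex hull {i, j, k} | i j k.
      i \<in> lattice eps \<and> j \<in> lattice eps \<and> k \<in> lattice eps \<and>
      dist i j = eps \<and> dist j k = eps \<and> dist i k = eps}"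

definition edges :: "real \<Rightarrow> pt set set" where
  "edges eps = {closed_segment i j | i j. i \<in> lattice eps \<and> j \<in> lattice eps \<and> dist i j = eps}"

definition frustrated_edges :: "real \<Rightarrow> (pt \<Rightarrow> spin) \<Rightarrow> pt set set" where
  "frustrated_edges eps u = {closed_segment i j | i j.
      i \<in> lattice eps \<and> j \<in> lattice eps \<and> dist i j = eps \<and> u i = - u j}"

definition tri_neighbours :: "real \<Rightarrow> (pt \<Rightarrow> spin) \<Rightarrow> pt set \<Rightarrow> pt set \<Rightarrow> bool" where
  "tri_neighbours eps u T1 T2 \<longleftrightarrow> T1 \<in> triangles eps \<and> T2 \<in> triangles eps \<and>
      T1 \<inter> T2 \<in> frustrated_edges eps u"

definition tri_connected :: "real \<Rightarrow> (pt \<Rightarrow> spin) \<Rightarrow> pt set \<Rightarrow> pt set \<Rightarrow> bool" where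
  "tri_connected eps u T1 T2 \<longleftrightarrow> (tri_neighbours eps u)\<^sup>*\<^sup>* T1 T2"

definition pw_connected_family :: "real \<Rightarrow> (pt \<Rightarrow> spin) \<Rightarrow> pt set set \<Rightarrow> bool" where
  "pw_connected_family eps u C \<longleftrightarrow> C \<subseteq> triangles eps \<and>
      (\<forall>T1\<in>C. \<forall>T2\<in>C. tri_connected eps u T1 T2)"

definition admissible_regions :: "real \<Rightarrow> (pt \<Rightarrow> spin) \<Rightarrow> pt set set" where
  "admissible_regions eps u = {\<Union>C | C. pw_connected_family eps u C \<and>
      (\<forall>C'. pw_connected_family eps u C' \<and> \<Union>C \<subseteq> \<Union>C' \<longrightarrow> \<Union>C' = \<Union>C)}"

end

theory Submission
  imports Defs
begin


lemma graph_leaves: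
  fixes N :: "'a \<Rightarrow> 'a \<Rightarrow> bool" and x y z :: 'a
  assumes sym: "\<And>a b. N a b \<Longrightarrow> N b a"
   and deg2: "\<And>b y1 y2 y3. N\<^sup>*\<^sup>* x b \<Longrightarrow> N b y1 \<Longrightarrow> N b y2 \<Longrightarrow> N b y3 \<Longrightarrow> y1 \<noteq> y2 \<Longrightarrow> y1 \<noteq> y3 \<Longrightarrow> y2 \<noteq> y3 \<Longrightarrow> False"
   and leaf: "\<And>a b. N x a \<Longrightarrow> N x b \<Longrightarrow> a = b"
   and yr: "N\<^sup>*\<^sup>* x y" and yx: "y \<noteq> x" and yl: "\<And>a b. N y a \<Longrightarrow> N y b \<Longrightarrow> a = b"
   and zr: "N\<^sup>*\<^sup>* x z" and zx: "z \<noteq> x" and zl: "\<And>a b. N z a \<Longrightarrow> N z b \<Longrightarrow> a = b"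
  shows "y = z"
proof -
  define S where "S k = {y. (N^^k) x y \<and> (\<forall>j<k. \<not>(N^^j) x y)}" for k
  have pred: "\<exists>b\<in>S k. N b y" if "y \<in> S (Suc k)" for y k
  proof -
    from that have h: "(N^^Suc k) x y" and m: "\<forall>j<Suc k. \<not>(N^^j) x y" by (auto simp: S_def)
    from h obtain b where b: "(N^^k) x b" "N b y" by auto
    have "b \<in> S k"
    proof -
      { fix j assume "j < k" "(N^^j) x b"
        then have "(N^^Suc j) x y" using b(2) by (meson relpowp_Suc_I)
        with m \<open>j<k\<close> have False by (meson Suc_mono) }
      then show ?thesis using b by (auto simp: S_def)
    qed
    with b show ?thesis by auto
  qed
  have lev: "k = k'" if "y \<in> S k" "y \<in> S k'" for y k k'
  proof (rule ccontr)
    assume "k \<noteq> k'"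
    then consider "k < k'" | "k' < k" by linarith
    then show False using that unfolding S_def by (cases) auto
  qed
  have reach: "N\<^sup>*\<^sup>* x y" if "y \<in> S k" for y k
    using that unfolding S_def by (auto intro: relpowp_imp_rtranclp)
  have sub: "\<forall>y z. y \<in> S k \<longrightarrow> z \<in> S k \<longrightarrow> y = z" for k
  proof (induction k rule: less_induct)
    case (less k)
    show ?case
    proof (cases k)
      case 0 then show ?thesis by (auto simp: S_def)
    next
      case (Suc m) note km = Suc
      show ?thesis
      proof (cases m)
        case 0 then show ?thesis using km leaf by (auto simp: S_def)
      next
        case (Suc n)
        show ?thesis
        proof (intro allI impI)
          fix y z assume y: "y \<in> S k" and z: "z \<in> S k"
          obtain b1 where b1: "b1 \<in> S m" "N b1 y" using pred[of y m] y km by auto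
          obtain b2 where b2: "b2 \<in> S m" "N b2 z" using pred[of z m] z km by auto
          have "b1 = b2" using less.IH[of m] km b1 b2 by auto
          obtain a where a: "a \<in> S n" "N a b1" using pred[of b1 n] b1(1) Suc by auto
          have ay: "a \<noteq> y" using lev[of a n k] a(1) y km Suc by auto
          have az: "a \<noteq> z" using lev[of a n k] a(1) z km Suc by auto
          show "y = z"
          proof (rule ccontr)
            assume "y \<noteq> z"
            then show False using deg2[OF reach[OF b1(1)] sym[OF a(2)] b1(2), of z] b2 \<open>b1 = b2\<close> ay az by auto
          qed
        qed
      qed
    qed
  qed
  have endl: "S (Suc k) = {}" if yS: "y \<in> S k" and k1: "k \<ge> 1" and yL: "\<And>a b. N y a \<Longrightarrow> N y b \<Longrightarrow> a = b" for y k
  proof (rule ccontr)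
    assume "S (Suc k) \<noteq> {}"
    then obtain z where z: "z \<in> S (Suc k)" by auto
    obtain b where b: "b \<in> S k" "N b z" using pred[of z k] z by auto
    have "b = y" using sub[of k] b yS by auto
    obtain k0 where k0: "k = Suc k0" using k1 by (cases k) auto
    obtain a where a: "a \<in> S k0" "N a y" using pred[of y k0] yS k0 by auto
    have "a = z" using yL sym[OF a(2)] b \<open>b = y\<close> by auto
    then show False using lev[of a k0 "Suc k"] a(1) z k0 by auto
  qed
  have propg: "S (k + j) = {}" if "S k = {}" for k j
  proof (induction j)
    case 0 then show ?case using that by simp
  next
    case (Suc j) then show ?case using pred[of _ "k+j"] by auto
  qed
  have inS: "\<exists>k. k \<ge> 1 \<and> w \<in> S k" if wr: "N\<^sup>*\<^sup>* x w" and wx: "w \<noteq> x" for w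
  proof -
    obtain k where k: "(N^^k) x w" using rtranclp_imp_relpowp[OF wr] by auto
    define k0 where "k0 = (LEAST k. (N^^k) x w)"
    have "(N^^k0) x w" unfolding k0_def by (rule LeastI[of _ k], rule k)
    moreover have "\<forall>j<k0. \<not>(N^^j) x w" unfolding k0_def using not_less_Least by blast
    ultimately have "w \<in> S k0" by (auto simp: S_def)
    moreover have "k0 \<noteq> 0" using \<open>(N^^k0) x w\<close> wx by (cases k0) auto
    ultimately show ?thesis by (intro exI[of _ k0]) auto
  qed
  obtain ky where ky: "ky \<ge> 1" "y \<in> S ky" using inS[OF yr yx] by auto
  obtain kz where kz: "kz \<ge> 1" "z \<in> S kz" using inS[OF zr zx] by auto
  have "\<not> ky < kz"
  proof
    assume "ky < kz"
    then have "S kz = {}" using propg[OF endl[OF ky(2) ky(1) yl], of "kz - Suc ky"] by simp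
    then show False using kz by auto
  qed
  moreover have "\<not> kz < ky"
  proof
    assume "kz < ky"
    then have "S ky = {}" using propg[OF endl[OF kz(2) kz(1) zl], of "ky - Suc kz"] by simp
    then show False using ky by auto
  qed
  ultimately have "ky = kz" by simp
  then show ?thesis using sub[of ky] ky kz by auto
qed



lemma dist_pt_sq: "(dist (a::pt) b)^2 = (fst a - fst b)^2 + (snd a - snd b)^2"
  by (cases a, cases b) (simp add: dist_Pair_Pair dist_real_def)

lemma int_form_pos:
  fixes m n :: int assumes "m \<noteq> 0 \<or> n \<noteq> 0" shows "m^2 + m*n + n^2 \<ge> 1"
proof -
  have "2*(m^2 + m*n + n^2) = m^2 + n^2 + (m+n)^2" by (simp add: algebra_simps power2_eq_square)
  moreover have "m^2 + n^2 > 0" using assms by (auto simp: sum_power2_gt_zero_iff)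
  moreover have "(m+n)^2 \<ge> 0" by simp
  ultimately have "2*(m^2 + m*n + n^2) \<ge> 1" by linarith
  moreover have g: "\<And>X::int. 1 \<le> 2*X \<Longrightarrow> 1 \<le> X" by presburger
  ultimately show ?thesis by blast
qed

lemma lattice_sep:
  assumes "eps > 0" "p \<in> lattice eps" "q \<in> lattice eps" "p \<noteq> q"
  shows "dist p q \<ge> eps"
proof -
  obtain a b where p: "p = (eps * (of_int a + of_int b / 2), eps * (of_int b * sqrt 3 / 2))"
    using assms(2) by (auto simp: lattice_def)
  obtain c d where q: "q = (eps * (of_int c + of_int d / 2), eps * (of_int d * sqrt 3 / 2))"
    using assms(3) by (auto simp: lattice_def)
  define m where "m = a - c"
  define n where "n = b - d"
  have "m \<noteq> 0 \<or> n \<noteq> 0" using assms(4) p q m_def n_def by auto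
  then have f: "real_of_int (m^2 + m*n + n^2) \<ge> 1" using int_form_pos by (metis of_int_1_le_iff)
  have s3: "sqrt 3 ^ 2 = (3::real)" by simp
  have "(dist p q)^2 = eps^2 * real_of_int (m^2 + m*n + n^2)"
    unfolding dist_pt_sq p q m_def n_def
    by (simp add: algebra_simps power2_eq_square s3[unfolded power2_eq_square])
  also have "\<dots> \<ge> eps^2" using f assms(1) by simp
  finally have "eps^2 \<le> (dist p q)^2" .
  then show ?thesis using power2_le_imp_le zero_le_dist by blast
qed

lemma bary_identity:
  fixes al be ga :: real and i j k x :: pt
  assumes "al + be + ga = 1" "x = al *\<^sub>R i + be *\<^sub>R j + ga *\<^sub>R k"
  shows "al * (dist x i)^2 + be * (dist x j)^2 + ga * (dist x k)^2
       = al*be*(dist i j)^2 + be*ga*(dist j k)^2 + al*ga*(dist i k)^2"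
proof -
  obtain i1 i2 j1 j2 k1 k2 where ijk: "i = (i1,i2)" "j = (j1,j2)" "k = (k1,k2)" by (cases i, cases j, cases k) auto
  have ga: "ga = 1 - al - be" using assms(1) by simp
  show ?thesis unfolding dist_pt_sq assms(2) ijk ga
    by (simp add: algebra_simps power2_eq_square)
qed

lemma lattice_in_tri:
  assumes "eps > 0" "i \<in> lattice eps" "j \<in> lattice eps" "k \<in> lattice eps"
    "dist i j = eps" "dist j k = eps" "dist i k = eps"
    "x \<in> lattice eps" "x \<in> convex hull {i,j,k}"
  shows "x \<in> {i,j,k}"
proof (rule ccontr)
  assume nx: "x \<notin> {i,j,k}"
  obtain al be ga where abg: "0 \<le> al" "0 \<le> be" "0 \<le> ga" "al + be + ga = 1"
     "x = al *\<^sub>R i + be *\<^sub>R j + ga *\<^sub>R k"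
    using assms(9) unfolding convex_hull_3 by auto
  have di: "(dist x i)^2 \<ge> eps^2" using lattice_sep[OF assms(1) assms(8) assms(2)] nx assms(1)
    by (intro power_mono) auto
  have dj: "(dist x j)^2 \<ge> eps^2" using lattice_sep[OF assms(1) assms(8) assms(3)] nx assms(1)
    by (intro power_mono) auto
  have dk: "(dist x k)^2 \<ge> eps^2" using lattice_sep[OF assms(1) assms(8) assms(4)] nx assms(1)
    by (intro power_mono) auto
  have "al * eps^2 + be * eps^2 + ga * eps^2 = (al+be+ga)*eps^2" by (simp add: algebra_simps)
  then have "eps^2 = al * eps^2 + be * eps^2 + ga * eps^2" using abg(4) by simp
  also have "\<dots> \<le> al * (dist x i)^2 + be * (dist x j)^2 + ga * (dist x k)^2"
    using di dj dk abg by (intro add_mono mult_left_mono) auto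
  also have "\<dots> = eps^2 * (al*be + be*ga + al*ga)"
    unfolding bary_identity[OF abg(4) abg(5)] assms(5-7) by (simp add: algebra_simps)
  finally have A: "eps^2 \<le> eps^2 * (al*be + be*ga + al*ga)" .
  have sq: "0 \<le> (al-be)^2 + (be-ga)^2 + (al-ga)^2" by simp
  have "(al+be+ga)^2 = 1" using abg(4) by simp
  then have "al*be + be*ga + al*ga \<le> 1/3" using sq by (simp add: algebra_simps power2_eq_square)
  then have "eps^2 * (al*be + be*ga + al*ga) \<le> eps^2 * (1/3)" using assms(1) by (intro mult_left_mono) auto
  with A assms(1) show False by simp
qed

lemma recover:
  fixes t1 t2 d1 d2 :: real
  shows "t1 * (d1^2 + d2^2) = (t1*d1+t2*d2)*d1 + (t1*d2 - t2*d1)*d2"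
    and "t2 * (d1^2 + d2^2) = (t1*d1+t2*d2)*d2 - (t1*d2 - t2*d1)*d1"
  by (simp_all add: algebra_simps power2_eq_square)

lemma lagrange2:
  fixes t1 t2 d1 d2 :: real
  shows "(t1*d1+t2*d2)^2 + (t1*d2 - t2*d1)^2 = (t1^2+t2^2)*(d1^2+d2^2)"
  by (simp add: algebra_simps power2_eq_square)

lemma two_circles:
  fixes i j a b c :: pt and e :: real
  assumes "e > 0" "dist i j = e"
    "dist a i = e" "dist a j = e" "dist b i = e" "dist b j = e" "dist c i = e" "dist c j = e"
  shows "a = b \<or> a = c \<or> b = c"
proof -
  define d1 where "d1 = fst j - fst i"
  define d2 where "d2 = snd j - snd i"
  define E where "E = d1^2 + d2^2"
  have E: "E = e^2" using assms(2) unfolding E_def d1_def d2_def dist_pt_sq[symmetric] by (simp add: dist_commute)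
  have Ene: "E \<noteq> 0" using E assms(1) by simp
  define dt where "dt p = (fst p - fst i)*d1 + (snd p - snd i)*d2" for p :: pt
  define cr where "cr p = (fst p - fst i)*d2 - (snd p - snd i)*d1" for p :: pt
  have key: "dt p = E/2 \<and> (cr p)^2 = E^2 * 3/4" if "dist p i = e" "dist p j = e" for p
  proof -
    have h1: "(fst p - fst i)^2 + (snd p - snd i)^2 = E" using that(1) E unfolding dist_pt_sq[symmetric] by simp
    have h2: "(fst p - fst j)^2 + (snd p - snd j)^2 = E" using that(2) E unfolding dist_pt_sq[symmetric] by simp
    have "fst p - fst j = (fst p - fst i) - d1" "snd p - snd j = (snd p - snd i) - d2" unfolding d1_def d2_def by simp_all
    with h2 have "((fst p - fst i) - d1)^2 + ((snd p - snd i) - d2)^2 = E" by simp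
    then have dtv: "dt p = E/2" using h1 unfolding dt_def E_def by (simp add: algebra_simps power2_eq_square)
    have "(dt p)^2 + (cr p)^2 = E * E" unfolding dt_def cr_def using lagrange2 h1 E_def by metis
    then have "(cr p)^2 = E*E - (dt p)^2" by linarith
    also have "\<dots> = E^2*3/4" unfolding dtv by (simp add: power2_eq_square field_simps)
    finally show ?thesis using dtv by simp
  qed
  have same: "p = q" if "dt p = dt q" "cr p = cr q" for p q :: pt
  proof -
    have r1: "(fst p' - fst i) * E = dt p' * d1 + cr p' * d2" for p'
      unfolding dt_def cr_def E_def by (simp add: algebra_simps power2_eq_square)
    have r2: "(snd p' - snd i) * E = dt p' * d2 - cr p' * d1" for p'
      unfolding dt_def cr_def E_def by (simp add: algebra_simps power2_eq_square)
    have "(fst p - fst i) * E = (fst q - fst i) * E" using r1[of p] r1[of q] that by simp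
    moreover have "(snd p - snd i) * E = (snd q - snd i) * E" using r2[of p] r2[of q] that by simp
    ultimately show ?thesis using Ene by (simp add: prod_eq_iff)
  qed
  have ka: "dt a = E/2" "(cr a)^2 = E^2*3/4" using key assms by auto
  have kb: "dt b = E/2" "(cr b)^2 = E^2*3/4" using key assms by auto
  have kc: "dt c = E/2" "(cr c)^2 = E^2*3/4" using key assms by auto
  have "(cr a)^2 = (cr b)^2" using ka kb by simp
  then have "cr a = cr b \<or> cr a = - cr b" using power2_eq_iff by blast
  moreover have "(cr a)^2 = (cr c)^2" using ka kc by simp
  then have "cr a = cr c \<or> cr a = - cr c" using power2_eq_iff by blast
  ultimately have "cr a = cr b \<or> cr a = cr c \<or> cr b = cr c" by auto
  then show ?thesis using same ka kb kc by metis
qed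



lemma self_neg: fixes v :: spin assumes "v = - v" shows "v = 0"
  using assms by (cases v) (auto simp: prod_eq_iff)

lemma edge_form:
  assumes "p \<in> {a,b,c}" "q \<in> {a,b,c}" "p \<noteq> q" "a \<noteq> b" "b \<noteq> c" "a \<noteq> c"
  shows "{p,q} = {a,b} \<or> {p,q} = {b,c} \<or> {p,q} = {a,c}"
  using assms by auto

lemma pig3:
  fixes f :: "'a \<Rightarrow> spin"
  assumes nz: "\<And>x. x \<in> {a,b,c} \<Longrightarrow> f x \<noteq> - f x" and dist: "a \<noteq> b" "b \<noteq> c" "a \<noteq> c"
  and e1: "p1 \<in> {a,b,c}" "q1 \<in> {a,b,c}" "p1 \<noteq> q1" "f p1 = - f q1"
  and e2: "p2 \<in> {a,b,c}" "q2 \<in> {a,b,c}" "p2 \<noteq> q2" "f p2 = - f q2"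
  and e3: "p3 \<in> {a,b,c}" "q3 \<in> {a,b,c}" "p3 \<noteq> q3" "f p3 = - f q3"
  shows "{p1,q1} = {p2,q2} \<or> {p1,q1} = {p3,q3} \<or> {p2,q2} = {p3,q3}"
proof -
  have nf: "\<not>(f a = - f b) \<or> \<not>(f b = - f c) \<or> \<not>(f a = - f c)"
  proof (rule ccontr)
    assume "\<not> ?thesis"
    then have "f a = - f b" "f b = - f c" "f a = - f c" by auto
    then have "f b = - f b" by (metis minus_minus)
    then show False using nz by auto
  qed
  have fe: "f x = - f y" if "f p = - f q" "{p,q} = {x,y}" for p q x y
    using that unfolding doubleton_eq_iff by (metis minus_minus)
  have E: "{p,q} = {a,b} \<or> {p,q} = {b,c} \<or> {p,q} = {a,c}" if "p \<in> {a,b,c}" "q \<in> {a,b,c}" "p \<noteq> q" for p q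
    using edge_form that dist by blast
  note E1 = E[OF e1(1-3)] and E2 = E[OF e2(1-3)] and E3 = E[OF e3(1-3)]
  have F1: "{p1,q1} = {x,y} \<Longrightarrow> f x = - f y" for x y using fe e1(4) by blast
  have F2: "{p2,q2} = {x,y} \<Longrightarrow> f x = - f y" for x y using fe e2(4) by blast
  have F3: "{p3,q3} = {x,y} \<Longrightarrow> f x = - f y" for x y using fe e3(4) by blast
  from nf show ?thesis
  proof (elim disjE)
    assume h: "f a \<noteq> - f b"
    have "{p1,q1} = {b,c} \<or> {p1,q1} = {a,c}" using E1 F1[of a b] h by blast
    moreover have "{p2,q2} = {b,c} \<or> {p2,q2} = {a,c}" using E2 F2[of a b] h by blast
    moreover have "{p3,q3} = {b,c} \<or> {p3,q3} = {a,c}" using E3 F3[of a b] h by blast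
    ultimately show ?thesis by metis
  next
    assume h: "f b \<noteq> - f c"
    have "{p1,q1} = {a,b} \<or> {p1,q1} = {a,c}" using E1 F1[of b c] h by blast
    moreover have "{p2,q2} = {a,b} \<or> {p2,q2} = {a,c}" using E2 F2[of b c] h by blast
    moreover have "{p3,q3} = {a,b} \<or> {p3,q3} = {a,c}" using E3 F3[of b c] h by blast
    ultimately show ?thesis by metis
  next
    assume h: "f a \<noteq> - f c"
    have "{p1,q1} = {a,b} \<or> {p1,q1} = {b,c}" using E1 F1[of a c] h by blast
    moreover have "{p2,q2} = {a,b} \<or> {p2,q2} = {b,c}" using E2 F2[of a c] h by blast
    moreover have "{p3,q3} = {a,b} \<or> {p3,q3} = {b,c}" using E3 F3[of a c] h by blast
    ultimately show ?thesis by metis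
  qed
qed

lemma pig_exotic:
  fixes f :: "'a \<Rightarrow> spin"
  assumes dist: "a \<noteq> b" "b \<noteq> c" "a \<noteq> c"
  and w: "w \<in> f ` {a,b,c}" "- w \<in> f ` {a,b,c}" "w \<noteq> - w"
  and ex: "x \<in> {a,b,c}" "f x \<noteq> w" "f x \<noteq> - w"
  and e1: "p1 \<in> {a,b,c}" "q1 \<in> {a,b,c}" "p1 \<noteq> q1" "f p1 = - f q1"
  and e2: "p2 \<in> {a,b,c}" "q2 \<in> {a,b,c}" "p2 \<noteq> q2" "f p2 = - f q2"
  shows "{p1,q1} = {p2,q2}"
proof -
  obtain y where y: "y \<in> {a,b,c}" "f y = w" using w(1) by (metis imageE)
  obtain z where z: "z \<in> {a,b,c}" "f z = - w" using w(2) by (metis imageE)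
  note yz = y(1) z(1) y(2) z(2)
  have "y \<noteq> z" "x \<noteq> y" "x \<noteq> z" using yz w(3) ex by auto
  then have abc: "{a,b,c} = {x,y,z}" using yz ex dist by auto
  have px: "p \<noteq> x" if "p \<in> {a,b,c}" "q \<in> {a,b,c}" "p \<noteq> q" "f p = - f q" for p q
  proof
    assume "p = x"
    have "q = y \<or> q = z" using that abc \<open>p = x\<close> by auto
    then show False
    proof
      assume "q = y" then show False using that(4) \<open>p = x\<close> yz ex by auto
    next
      assume "q = z" then show False using that(4) \<open>p = x\<close> yz ex by auto
    qed
  qed
  have qx: "q \<noteq> x" if "p \<in> {a,b,c}" "q \<in> {a,b,c}" "p \<noteq> q" "f p = - f q" for p q
    using px[of q p] that by (metis minus_minus)
  have "p1 \<noteq> x" "q1 \<noteq> x" "p2 \<noteq> x" "q2 \<noteq> x"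
    using px[OF e1] qx[OF e1] px[OF e2] qx[OF e2] by auto
  then have "{p1,q1} = {y,z}" "{p2,q2} = {y,z}" using e1(1-3) e2(1-3) abc by auto
  then show ?thesis by simp
qed



definition vert :: "real \<Rightarrow> pt set \<Rightarrow> pt set" where "vert eps T = lattice eps \<inter> T"

lemma tri_vert:
  assumes "eps > 0" "T \<in> triangles eps"
  obtains i j k where "T = convex hull {i,j,k}" "vert eps T = {i,j,k}" "i \<in> lattice eps" "j \<in> lattice eps"
    "k \<in> lattice eps" "dist i j = eps" "dist j k = eps" "dist i k = eps"
proof -
  from assms(2) obtain i j k where h: "T = convex hull {i,j,k}" "i \<in> lattice eps" "j \<in> lattice eps"
    "k \<in> lattice eps" "dist i j = eps" "dist j k = eps" "dist i k = eps" by (auto simp: triangles_def)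
  have "vert eps T = {i,j,k}"
  proof
    show "vert eps T \<subseteq> {i,j,k}" unfolding vert_def h(1) using lattice_in_tri[OF assms(1) h(2-7)] by blast
    show "{i,j,k} \<subseteq> vert eps T" unfolding vert_def h(1) using h(2-4) by (auto intro: hull_inc)
  qed
  then show thesis using that h by blast
qed

lemma tri_edge:
  assumes "eps > 0" "T \<in> triangles eps" "p \<in> vert eps T" "q \<in> vert eps T" "p \<noteq> q"
  obtains r where "T = convex hull {p,q,r}" "dist p r = eps" "dist q r = eps" "dist p q = eps"
proof -
  obtain i j k where h: "T = convex hull {i,j,k}" "vert eps T = {i,j,k}" "i \<in> lattice eps" "j \<in> lattice eps"
    "k \<in> lattice eps" "dist i j = eps" "dist j k = eps" "dist i k = eps" using tri_vert[OF assms(1,2)] by blast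
  have pq: "p \<in> {i,j,k}" "q \<in> {i,j,k}" using assms(3,4) h(2) by auto
  have "\<exists>r. {i,j,k} = {p,q,r} \<and> dist p r = eps \<and> dist q r = eps \<and> dist p q = eps"
  proof -
    consider "p = i" "q = j" | "p = j" "q = i" | "p = i" "q = k" | "p = k" "q = i" | "p = j" "q = k" | "p = k" "q = j"
      using pq assms(5) by auto
    then show ?thesis
    proof cases
      case 1 then show ?thesis using h by (intro exI[of _ k]) (auto simp: dist_commute)
    next
      case 2 then show ?thesis using h by (intro exI[of _ k]) (auto simp: dist_commute insert_commute)
    next
      case 3 then show ?thesis using h by (intro exI[of _ j]) (auto simp: dist_commute insert_commute)
    next
      case 4 then show ?thesis using h by (intro exI[of _ j]) (auto simp: dist_commute insert_commute)
    next
      case 5 then show ?thesis using h by (intro exI[of _ i]) (auto simp: dist_commute insert_commute)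
    next
      case 6 then show ?thesis using h by (intro exI[of _ i]) (auto simp: dist_commute insert_commute)
    qed
  qed
  then obtain r where "{i,j,k} = {p,q,r}" "dist p r = eps" "dist q r = eps" "dist p q = eps" by blast
  then show thesis using that h(1) by metis
qed

lemma three_tri:
  assumes "eps > 0" "T1 \<in> triangles eps" "T2 \<in> triangles eps" "T3 \<in> triangles eps"
    "T1 \<noteq> T2" "T1 \<noteq> T3" "T2 \<noteq> T3" "p \<noteq> q"
    "p \<in> vert eps T1" "q \<in> vert eps T1" "p \<in> vert eps T2" "q \<in> vert eps T2" "p \<in> vert eps T3" "q \<in> vert eps T3"
  shows False
proof -
  obtain r1 where r1: "T1 = convex hull {p,q,r1}" "dist p r1 = eps" "dist q r1 = eps" "dist p q = eps"
    using tri_edge[OF assms(1,2,9,10,8)] by blast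
  obtain r2 where r2: "T2 = convex hull {p,q,r2}" "dist p r2 = eps" "dist q r2 = eps"
    using tri_edge[OF assms(1,3,11,12,8)] by blast
  obtain r3 where r3: "T3 = convex hull {p,q,r3}" "dist p r3 = eps" "dist q r3 = eps"
    using tri_edge[OF assms(1,4,13,14,8)] by blast
  have "r1 = r2 \<or> r1 = r3 \<or> r2 = r3"
    using two_circles[of eps p q r1 r2 r3] assms(1) r1 r2 r3 by (simp add: dist_commute)
  then show False using r1 r2 r3 assms(5-7) by auto
qed

lemma nb_edge:
  assumes "tri_neighbours eps u T T'" "eps > 0"
  obtains p q where "p \<in> vert eps T" "q \<in> vert eps T" "p \<in> vert eps T'" "q \<in> vert eps T'" "p \<noteq> q" "u p = - u q"
proof -
  from assms(1) obtain p q where h: "T \<inter> T' = closed_segment p q" "p \<in> lattice eps" "q \<in> lattice eps"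
    "dist p q = eps" "u p = - u q"
    unfolding tri_neighbours_def frustrated_edges_def by blast
  have "p \<in> T \<inter> T'" "q \<in> T \<inter> T'" using h(1) by auto
  moreover have "p \<noteq> q" using h(4) assms(2) by auto
  ultimately show thesis using that h unfolding vert_def by blast
qed

lemma sf_nz:
  assumes "u \<in> SF eps \<Omega>" "x \<in> lattice eps" shows "u x \<noteq> - u x"
proof
  assume "u x = - u x"
  then have "u x = 0" by (rule self_neg)
  moreover have "u x \<in> sphere 0 1" using assms unfolding SF_def by blast
  ultimately show False by simp
qed

definition Nb :: "real \<Rightarrow> (pt \<Rightarrow> spin) \<Rightarrow> pt set \<Rightarrow> pt set \<Rightarrow> bool" where
  "Nb eps u T T' \<longleftrightarrow> tri_neighbours eps u T T' \<and> T \<noteq> T'"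

lemma nb_sym: "tri_neighbours eps u T T' \<Longrightarrow> tri_neighbours eps u T' T"
  unfolding tri_neighbours_def by (simp add: Int_commute)

lemma Nb_sym: "Nb eps u T T' \<Longrightarrow> Nb eps u T' T"
  unfolding Nb_def using nb_sym by blast

lemma rt_Nb: "(tri_neighbours eps u)\<^sup>*\<^sup>* x y \<Longrightarrow> (Nb eps u)\<^sup>*\<^sup>* x y"
proof (induction rule: rtranclp_induct)
  case base then show ?case by simp
next
  case (step y z) then show ?case
    by (cases "y = z") (auto simp: Nb_def intro: rtranclp.rtrancl_into_rtrancl)
qed

lemma deg2:
  assumes "eps > 0" "u \<in> SF eps \<Omega>" "Nb eps u T T1" "Nb eps u T T2" "Nb eps u T T3"
    "T1 \<noteq> T2" "T1 \<noteq> T3" "T2 \<noteq> T3"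
  shows False
proof -
  have T: "T \<in> triangles eps" and Ts: "T1 \<in> triangles eps" "T2 \<in> triangles eps" "T3 \<in> triangles eps"
    and ne: "T \<noteq> T1" "T \<noteq> T2" "T \<noteq> T3"
    using assms(3-5) unfolding Nb_def tri_neighbours_def by auto
  obtain a b c where abc: "vert eps T = {a,b,c}" "a \<in> lattice eps" "b \<in> lattice eps" "c \<in> lattice eps"
    "dist a b = eps" "dist b c = eps" "dist a c = eps" using tri_vert[OF assms(1) T] by metis
  have d: "a \<noteq> b" "b \<noteq> c" "a \<noteq> c" using abc assms(1) by auto
  have nz: "\<And>x. x \<in> {a,b,c} \<Longrightarrow> u x \<noteq> - u x" using sf_nz[OF assms(2)] abc by auto
  obtain p1 q1 where e1: "p1 \<in> vert eps T" "q1 \<in> vert eps T" "p1 \<in> vert eps T1" "q1 \<in> vert eps T1" "p1 \<noteq> q1" "u p1 = - u q1"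
    using nb_edge assms(1,3) unfolding Nb_def by metis
  obtain p2 q2 where e2: "p2 \<in> vert eps T" "q2 \<in> vert eps T" "p2 \<in> vert eps T2" "q2 \<in> vert eps T2" "p2 \<noteq> q2" "u p2 = - u q2"
    using nb_edge assms(1,4) unfolding Nb_def by metis
  obtain p3 q3 where e3: "p3 \<in> vert eps T" "q3 \<in> vert eps T" "p3 \<in> vert eps T3" "q3 \<in> vert eps T3" "p3 \<noteq> q3" "u p3 = - u q3"
    using nb_edge assms(1,5) unfolding Nb_def by metis
  have "{p1,q1} = {p2,q2} \<or> {p1,q1} = {p3,q3} \<or> {p2,q2} = {p3,q3}"
    using pig3[of a b c u p1 q1 p2 q2 p3 q3] nz d e1 e2 e3 abc(1) by auto
  then show False
  proof (elim disjE)
    assume h: "{p1,q1} = {p2,q2}"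
    then have "p1 \<in> vert eps T2" "q1 \<in> vert eps T2" using e2 by (auto simp: doubleton_eq_iff)
    then show False using three_tri[OF assms(1) T Ts(1) Ts(2) ne(1) ne(2) assms(6) e1(5) e1(1,2) e1(3,4)] by blast
  next
    assume h: "{p1,q1} = {p3,q3}"
    then have "p1 \<in> vert eps T3" "q1 \<in> vert eps T3" using e3 by (auto simp: doubleton_eq_iff)
    then show False using three_tri[OF assms(1) T Ts(1) Ts(3) ne(1) ne(3) assms(7) e1(5) e1(1,2) e1(3,4)] by blast
  next
    assume h: "{p2,q2} = {p3,q3}"
    then have "p2 \<in> vert eps T3" "q2 \<in> vert eps T3" using e3 by (auto simp: doubleton_eq_iff)
    then show False using three_tri[OF assms(1) T Ts(2) Ts(3) ne(2) ne(3) assms(8) e2(5) e2(1,2) e2(3,4)] by blast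
  qed
qed

lemma deg1:
  assumes "eps > 0" "u \<in> SF eps \<Omega>" "Nb eps u T T1" "Nb eps u T T2" "T1 \<noteq> T2"
    "w \<in> u ` vert eps T" "- w \<in> u ` vert eps T" "w \<noteq> - w" "x \<in> vert eps T" "u x \<noteq> w" "u x \<noteq> - w"
  shows False
proof -
  have T: "T \<in> triangles eps" and Ts: "T1 \<in> triangles eps" "T2 \<in> triangles eps"
    and ne: "T \<noteq> T1" "T \<noteq> T2"
    using assms(3-4) unfolding Nb_def tri_neighbours_def by auto
  obtain a b c where abc: "vert eps T = {a,b,c}" "a \<in> lattice eps" "b \<in> lattice eps" "c \<in> lattice eps"
    "dist a b = eps" "dist b c = eps" "dist a c = eps" using tri_vert[OF assms(1) T] by metis
  have d: "a \<noteq> b" "b \<noteq> c" "a \<noteq> c" using abc assms(1) by auto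
  obtain p1 q1 where e1: "p1 \<in> vert eps T" "q1 \<in> vert eps T" "p1 \<in> vert eps T1" "q1 \<in> vert eps T1" "p1 \<noteq> q1" "u p1 = - u q1"
    using nb_edge assms(1,3) unfolding Nb_def by metis
  obtain p2 q2 where e2: "p2 \<in> vert eps T" "q2 \<in> vert eps T" "p2 \<in> vert eps T2" "q2 \<in> vert eps T2" "p2 \<noteq> q2" "u p2 = - u q2"
    using nb_edge assms(1,4) unfolding Nb_def by metis
  have "{p1,q1} = {p2,q2}"
    using pig_exotic[of a b c w u x p1 q1 p2 q2] d assms(6-11) e1 e2 abc(1) by auto
  then have "p1 \<in> vert eps T2" "q1 \<in> vert eps T2" using e2 by (auto simp: doubleton_eq_iff)
  then show False using three_tri[OF assms(1) T Ts(1) Ts(2) ne(1) ne(2) assms(5) e1(5) e1(1,2) e1(3,4)] by blast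
qed

lemma card3: "card (f ` {a,b,c}) \<le> 3"
proof -
  have "card {a,b,c} \<le> 3" by (auto simp: card_insert_if)
  moreover have "card (f ` {a,b,c}) \<le> card {a,b,c}" by (rule card_image_le) simp
  ultimately show ?thesis by linarith
qed

lemma prop_step:
  assumes "eps > 0" "u \<in> SF eps \<Omega>" "tri_neighbours eps u T T'"
    "w \<in> u ` vert eps T" "- w \<in> u ` vert eps T" "w \<noteq> - w"
  shows "w \<in> u ` vert eps T' \<and> - w \<in> u ` vert eps T'"
proof -
  have T: "T \<in> triangles eps" using assms(3) unfolding tri_neighbours_def by auto
  obtain a b c where abc: "vert eps T = {a,b,c}" using tri_vert[OF assms(1) T] by metis
  obtain p q where e: "p \<in> vert eps T" "q \<in> vert eps T" "p \<in> vert eps T'" "q \<in> vert eps T'" "p \<noteq> q" "u p = - u q"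
    using nb_edge assms(1,3) by metis
  have uq: "u q = - u p" using e(6) by simp
  have nzp: "u p \<noteq> - u p" using sf_nz[OF assms(2)] e(1) unfolding vert_def by auto
  show ?thesis
  proof (cases "u p = w \<or> u p = - w")
    case True
    have "u p \<in> u ` vert eps T'" "u q \<in> u ` vert eps T'" using e(3,4) by auto
    then show ?thesis using True uq by (metis minus_minus)
  next
    case False
    then have "u q \<noteq> w" "u q \<noteq> - w" using uq by auto
    have sub: "{w, - w, u p, u q} \<subseteq> u ` vert eps T" using assms(4,5) e(1,2) by auto
    have "card {w, - w, u p, u q} = 4" using False \<open>u q \<noteq> w\<close> \<open>u q \<noteq> - w\<close> assms(6) nzp uq by auto
    moreover have "card {w, - w, u p, u q} \<le> card (u ` vert eps T)"
      using sub abc by (intro card_mono) auto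
    moreover have "card (u ` vert eps T) \<le> 3"
      unfolding abc by (rule card3)
    ultimately show ?thesis by simp
  qed
qed



lemma one_exotic:
  assumes "V = {a,b,c}" "w \<in> u ` V" "- w \<in> u ` V" "w \<noteq> - w"
    "c1 \<in> V" "c2 \<in> V" "u c1 \<notin> {w, - w}" "u c2 \<notin> {w, - w}"
  shows "c1 = c2"
proof -
  obtain y where y: "y \<in> V" "u y = w" using assms(2) by (metis imageE)
  obtain z where z: "z \<in> V" "u z = - w" using assms(3) by (metis imageE)
  have "y \<noteq> z" "c1 \<noteq> y" "c1 \<noteq> z" "c2 \<noteq> y" "c2 \<noteq> z" using y z assms(4,7,8) by auto
  then show ?thesis using y(1) z(1) assms(1,5,6) by auto
qed

lemma small_set:
  assumes "\<And>x1 x2 x3. x1 \<in> X \<Longrightarrow> x2 \<in> X \<Longrightarrow> x3 \<in> X \<Longrightarrow> x1 \<noteq> x2 \<Longrightarrow> x1 \<noteq> x3 \<Longrightarrow> x2 \<noteq> x3 \<Longrightarrow> False"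
  shows "finite X \<and> card X \<le> 2"
proof (cases "X = {}")
  case True then show ?thesis by simp
next
  case False
  then obtain x1 where x1: "x1 \<in> X" by auto
  show ?thesis
  proof (cases "X \<subseteq> {x1}")
    case True
    then have "X = {x1}" using x1 by auto
    then show ?thesis by simp
  next
    case False
    then obtain x2 where x2: "x2 \<in> X" "x2 \<noteq> x1" by auto
    have "X \<subseteq> {x1,x2}" using assms x1 x2 by blast
    moreover have "card {x1,x2} \<le> 2" by (simp add: card_insert_if)
    ultimately show ?thesis by (meson card_mono finite.emptyI finite.insertI finite_subset le_trans)
  qed
qed

theorem lemma5p3:
  fixes eps :: real and \<Omega> :: "pt set" and u :: "pt \<Rightarrow> spin" and R :: "pt set"
  assumes "eps > 0" and "bounded \<Omega>" and "open \<Omega>"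
    and "u \<in> SF eps \<Omega>" and "R \<in> admissible_regions eps u"
  shows "finite (u ` (lattice eps \<inter> R)) \<and> card (u ` (lattice eps \<inter> R)) \<le> 4"
proof -
  note eps = assms(1) and sf = assms(4)
  obtain C where RC: "R = \<Union>C" and pw: "pw_connected_family eps u C"
    using assms(5) unfolding admissible_regions_def by blast
  have Ctri: "C \<subseteq> triangles eps" and conn: "\<And>T1 T2. T1 \<in> C \<Longrightarrow> T2 \<in> C \<Longrightarrow> (tri_neighbours eps u)\<^sup>*\<^sup>* T1 T2"
    using pw unfolding pw_connected_family_def tri_connected_def by auto
  define V where "V = u ` (lattice eps \<inter> R)"
  have Vdef: "V = (\<Union>T\<in>C. u ` vert eps T)" unfolding V_def RC vert_def by blast
  have suff: "finite V \<and> card V \<le> 4" if "V \<subseteq> S" "finite S" "card S \<le> 4" for S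
    using that by (meson card_mono finite_subset le_trans)
  have "finite V \<and> card V \<le> 4"
  proof (cases "C = {}")
    case True then show ?thesis using Vdef by simp
  next
    case False
    then obtain T0 where T0: "T0 \<in> C" by auto
    have T0t: "T0 \<in> triangles eps" using T0 Ctri by auto
    show ?thesis
    proof (cases "\<exists>T'. Nb eps u T0 T'")
      case False
      have "T = T0" if "(tri_neighbours eps u)\<^sup>*\<^sup>* T0 T" for T
        using that
      proof (induction rule: rtranclp_induct)
        case base then show ?case by simp
      next
        case (step y z) then show ?case using False unfolding Nb_def by auto
      qed
      then have "C = {T0}" using conn T0 by blast
      then have "V = u ` vert eps T0" using Vdef by simp
      moreover obtain a b c where "vert eps T0 = {a,b,c}" using tri_vert[OF eps T0t] by metis
      ultimately show ?thesis using suff[of "u ` {a,b,c}"] card3[of u a b c] by simp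
    next
      case True
      then obtain T1 where "Nb eps u T0 T1" by auto
      then obtain p q where e: "p \<in> vert eps T0" "q \<in> vert eps T0" "p \<noteq> q" "u p = - u q"
        using nb_edge eps unfolding Nb_def by metis
      define w where "w = u p"
      have mw: "- w = u q" using e(4) unfolding w_def by simp
      have wT0: "w \<in> u ` vert eps T0" "- w \<in> u ` vert eps T0" using e(1,2) unfolding mw unfolding w_def by auto
      have wne: "w \<noteq> - w" using sf_nz[OF sf] e(1) unfolding w_def vert_def by auto
      have Pr: "w \<in> u ` vert eps T \<and> - w \<in> u ` vert eps T" if "(tri_neighbours eps u)\<^sup>*\<^sup>* T0 T" for T
        using that
      proof (induction rule: rtranclp_induct)
        case base then show ?case using wT0 by simp
      next
        case (step y z) then show ?case using prop_step[OF eps sf _ _ _ wne] by blast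
      qed
      have PC: "w \<in> u ` vert eps T \<and> - w \<in> u ` vert eps T" if "T \<in> C" for T
        using Pr conn T0 that by blast
      define X where "X = V - {w, - w}"
      have leafT: "a = b" if "T \<in> C" "x \<in> vert eps T" "u x \<notin> {w, - w}" "Nb eps u T a" "Nb eps u T b" for T x a b
      proof (rule ccontr)
        assume "a \<noteq> b"
        then show False using deg1[OF eps sf that(4) that(5) _ _ _ wne that(2)] PC[OF that(1)] that(3) by auto
      qed
      have no3: False if xs: "x1 \<in> X" "x2 \<in> X" "x3 \<in> X" "x1 \<noteq> x2" "x1 \<noteq> x3" "x2 \<noteq> x3" for x1 x2 x3
      proof -
        obtain A1 c1 where A1: "A1 \<in> C" "c1 \<in> vert eps A1" "u c1 = x1" "x1 \<notin> {w, - w}"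
          using xs(1) unfolding X_def Vdef by blast
        obtain A2 c2 where A2: "A2 \<in> C" "c2 \<in> vert eps A2" "u c2 = x2" "x2 \<notin> {w, - w}"
          using xs(2) unfolding X_def Vdef by blast
        obtain A3 c3 where A3: "A3 \<in> C" "c3 \<in> vert eps A3" "u c3 = x3" "x3 \<notin> {w, - w}"
          using xs(3) unfolding X_def Vdef by blast
        have distA: "Ai \<noteq> Aj" if h: "Ai \<in> C" "ci \<in> vert eps Ai" "u ci \<notin> {w, - w}"
          "Aj \<in> C" "cj \<in> vert eps Aj" "u cj \<notin> {w, - w}" "u ci \<noteq> u cj" for Ai Aj ci cj
        proof
          assume eq: "Ai = Aj"
          have "Ai \<in> triangles eps" using Ctri h(1) by auto
          then obtain a b c where abc: "vert eps Ai = {a,b,c}" using tri_vert[OF eps] by metis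
          have cj: "cj \<in> vert eps Ai" using h(5) eq by simp
          have pc: "w \<in> u ` vert eps Ai" "- w \<in> u ` vert eps Ai" using PC[OF h(1)] by auto
          have "ci = cj" by (rule one_exotic[OF abc pc wne h(2) cj h(3) h(6)])
          then show False using h(7) by simp
        qed
        have d12: "A1 \<noteq> A2" using distA[OF A1(1,2) _ A2(1,2)] A1 A2 xs by auto
        have d13: "A1 \<noteq> A3" using distA[OF A1(1,2) _ A3(1,2)] A1 A3 xs by auto
        have "A2 = A3"
        proof (rule graph_leaves[of "Nb eps u" A1 A2 A3])
          show "\<And>a b. Nb eps u a b \<Longrightarrow> Nb eps u b a" by (rule Nb_sym)
          show "\<And>b y1 y2 y3. Nb eps u b y1 \<Longrightarrow> Nb eps u b y2 \<Longrightarrow> Nb eps u b y3 \<Longrightarrow>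
              y1 \<noteq> y2 \<Longrightarrow> y1 \<noteq> y3 \<Longrightarrow> y2 \<noteq> y3 \<Longrightarrow> False"
            using deg2[OF eps sf] by blast
          show "\<And>a b. Nb eps u A1 a \<Longrightarrow> Nb eps u A1 b \<Longrightarrow> a = b" using leafT[OF A1(1,2)] A1 by auto
          show "\<And>a b. Nb eps u A2 a \<Longrightarrow> Nb eps u A2 b \<Longrightarrow> a = b" using leafT[OF A2(1,2)] A2 by auto
          show "\<And>a b. Nb eps u A3 a \<Longrightarrow> Nb eps u A3 b \<Longrightarrow> a = b" using leafT[OF A3(1,2)] A3 by auto
          show "(Nb eps u)\<^sup>*\<^sup>* A1 A2" using rt_Nb conn A1(1) A2(1) by blast
          show "(Nb eps u)\<^sup>*\<^sup>* A1 A3" using rt_Nb conn A1(1) A3(1) by blast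
          show "A2 \<noteq> A1" using d12 by simp
          show "A3 \<noteq> A1" using d13 by simp
        qed
        moreover have "A2 \<noteq> A3" using distA[OF A2(1,2) _ A3(1,2)] A2 A3 xs by auto
        ultimately show False by simp
      qed
      have Xs: "finite X \<and> card X \<le> 2" using small_set[of X] no3 by blast
      have "V \<subseteq> {w, - w} \<union> X" unfolding X_def by auto
      moreover have "finite ({w, - w} \<union> X)" using Xs by simp
      moreover have "card ({w, - w} \<union> X) \<le> 4"
      proof -
        have "card ({w, - w} \<union> X) \<le> card {w, - w} + card X" by (rule card_Un_le)
        moreover have "card {w, - w} \<le> 2" by (simp add: card_insert_if)
        ultimately show ?thesis using Xs by linarith
      qed
      ultimately show ?thesis using suff by blast
    qed
  qed
  then show ?thesis unfolding V_def .
qed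


end
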